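(* Let $n\ge i\ge0$ and $I\subseteq[n]$ with $|I|=i$. Then $\mathrm{UL}_I={}^{w_I}L_i\cap\mathrm{UT}_n$, $\mathrm{UR}_I={}^{w_I}R_i\cap\mathrm{UT}_n$, and $\mathrm{UP}_I={}^{w_I}P_i\cap\mathrm{UT}_n$.
   Context: Fix the finite field $\mathbb{F}_q$; $[n]=\{1,\dots,n\}$, $[i]^c=[n]\setminus[i]$, $I^c=[n]\setminus I$. $\mathrm{GL}_n$ is the group of invertible $n\times n$ matrices over $\mathbb{F}_q$ and $\mathrm{UT}_n$ its unipotent upper triangular subgroup. Subgroups of $\mathrm{GL}_n$: $L_i=\{g:g_{r,s}\ne0\text{ only if }(r,s)\in[i]\times[i]\cup[i]^c\times[i]^c\}$, $R_i=\{g:(g-1_n)_{r,s}\ne0\text{ only if }(r,s)\in[i]\times[i]^c\}$, $P_i=\{g:g_{r,s}=0\text{ whenever }(r,s)\in[i]^c\times[i]\}$. Subgroups of $\mathrm{UT}_n$: $\mathrm{UL}_I=\{g\in\mathrm{UT}_n:(g-1_n)_{r,s}\ne0\text{ only if }(r,s)\in I\times I\cup I^c\times I^c\}$, $\mathrm{UR}_I=\{g\in\mathrm{UT}_n:(g-1_n)_{r,s}\ne0\text{ only if }(r,s)\in I\times I^c\}$, $\mathrm{UP}_I=\{g\in\mathrm{UT}_n:(g-1_n)_{r,s}=0\text{ whenever }(r,s)\in I^c\times I\}$. Writing $I=\{i_1<\dots<i_{|I|}\}$ and $I^c=\{j_1<\dots<j_{n-|I|}\}$, $w_I$ is the permutation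 of $[n]$ with $w_I(k)=i_k$ for $k\le|I|$ and $w_I(|I|+k)=j_k$. For a permutation $w$ and $H\le\mathrm{GL}_n$, ${}^wH=\{P_whP_w^{-1}:h\in H\}$ where $P_w$ is the permutation matrix with $(P_whP_w^{-1})_{w(r),w(s)}=h_{r,s}$. *)

theory Defs
  imports Main
begin

text \<open>n x n matrices over a field, indexed by [n] = {1..n}, represented as
  functions nat \<Rightarrow> nat \<Rightarrow> 'a that vanish outside [n] x [n].\<close>

type_synonym 'a matrix = "nat \<Rightarrow> nat \<Rightarrow> 'a"

definition is_mat :: "nat \<Rightarrow> 'a::zero matrix \<Rightarrow> bool" where
  "is_mat n A \<longleftrightarrow> (\<forall>r s. (r \<notin> {1..n} \<or> s \<notin> {1..n}) \<longrightarrow> A r s = 0)"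

definition mat_mult :: "nat \<Rightarrow> 'a::semiring_0 matrix \<Rightarrow> 'a matrix \<Rightarrow> 'a matrix" where
  "mat_mult n A B = (\<lambda>r s. \<Sum>k\<in>{1..n}. A r k * B k s)"

definition one_mat :: "nat \<Rightarrow> 'a::{zero,one} matrix" where
  "one_mat n = (\<lambda>r s. if r = s \<and> r \<in> {1..n} then 1 else 0)"

definition mat_inv :: "nat \<Rightarrow> 'a::semiring_1 matrix \<Rightarrow> 'a matrix" where
  "mat_inv n A = (THE B. is_mat n B \<and> mat_mult n A B = one_mat n \<and> mat_mult n B A = one_mat n)"

definition GL :: "nat \<Rightarrow> ('a::{finite,field}) matrix set" where
  "GL n = {A. is_mat n A \<and> (\<exists>B. is_mat n B \<and> mat_mult n A B = one_mat n \<and> mat_mult n B A = one_mat n)}"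

definition UT :: "nat \<Rightarrow> ('a::{finite,field}) matrix set" where
  "UT n = {g \<in> GL n. \<forall>r\<in>{1..n}. \<forall>s\<in>{1..n}. (s < r \<longrightarrow> g r s = 0) \<and> (r = s \<longrightarrow> g r s = 1)}"

definition Lsub :: "nat \<Rightarrow> nat \<Rightarrow> ('a::{finite,field}) matrix set" where
  "Lsub n i = {g \<in> GL n. \<forall>r\<in>{1..n}. \<forall>s\<in>{1..n}. g r s \<noteq> 0 \<longrightarrow>
      ((r \<le> i \<and> s \<le> i) \<or> (i < r \<and> i < s))}"

definition Rsub :: "nat \<Rightarrow> nat \<Rightarrow> ('a::{finite,field}) matrix set" where
  "Rsub n i = {g \<in> GL n. \<forall>r\<in>{1..n}. \<forall>s\<in>{1..n}. (g r s - one_mat n r s) \<noteq> 0 \<longrightarrow>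
      (r \<le> i \<and> i < s)}"

definition Psub :: "nat \<Rightarrow> nat \<Rightarrow> ('a::{finite,field}) matrix set" where
  "Psub n i = {g \<in> GL n. \<forall>r\<in>{1..n}. \<forall>s\<in>{1..n}. (i < r \<and> s \<le> i) \<longrightarrow> g r s = 0}"

definition UL :: "nat \<Rightarrow> nat set \<Rightarrow> ('a::{finite,field}) matrix set" where
  "UL n I = {g \<in> UT n. \<forall>r\<in>{1..n}. \<forall>s\<in>{1..n}. (g r s - one_mat n r s) \<noteq> 0 \<longrightarrow>
      ((r \<in> I \<and> s \<in> I) \<or> (r \<in> {1..n} - I \<and> s \<in> {1..n} - I))}"

definition UR :: "nat \<Rightarrow> nat set \<Rightarrow> ('a::{finite,field}) matrix set" where
  "UR n I = {g \<in> UT n. \<forall>r\<in>{1..n}. \<forall>s\<in>{1..n}. (g r s - one_mat n r s) \<noteq> 0 \<longrightarrow>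
      (r \<in> I \<and> s \<in> {1..n} - I)}"

definition UP :: "nat \<Rightarrow> nat set \<Rightarrow> ('a::{finite,field}) matrix set" where
  "UP n I = {g \<in> UT n. \<forall>r\<in>{1..n}. \<forall>s\<in>{1..n}. (r \<in> {1..n} - I \<and> s \<in> I) \<longrightarrow>
      g r s - one_mat n r s = 0}"

definition wI :: "nat \<Rightarrow> nat set \<Rightarrow> nat \<Rightarrow> nat" where
  "wI n I k = (if k \<in> {1..n}
     then (sorted_list_of_set I @ sorted_list_of_set ({1..n} - I)) ! (k - 1)
     else k)"

text \<open>Permutation matrix P_w with (P_w)_{r,s} = 1 iff r = w(s), so that
  (P_w h P_w^{-1})_{w(r),w(s)} = h_{r,s}.\<close>
definition perm_mat :: "nat \<Rightarrow> (nat \<Rightarrow> nat) \<Rightarrow> ('a::{zero,one}) matrix" where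
  "perm_mat n w = (\<lambda>r s. if r \<in> {1..n} \<and> s \<in> {1..n} \<and> r = w s then 1 else 0)"

definition conj_set :: "nat \<Rightarrow> (nat \<Rightarrow> nat) \<Rightarrow> ('a::{finite,field}) matrix set \<Rightarrow> 'a matrix set" where
  "conj_set n w H = (\<lambda>h. mat_mult n (mat_mult n (perm_mat n w) h) (mat_inv n (perm_mat n w))) ` H"

end

theory Submission
  imports Defs
begin

definition pc :: "nat \<Rightarrow> (nat \<Rightarrow> nat) \<Rightarrow> 'a::zero matrix \<Rightarrow> 'a matrix" where
  "pc n w A = (\<lambda>r s. if r \<in> {1..n} \<and> s \<in> {1..n} then A (w r) (w s) else 0)"

definition tmat :: "nat \<Rightarrow> (nat \<Rightarrow> nat) \<Rightarrow> ('a::{zero,one}) matrix" where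
  "tmat n w = (\<lambda>r s. if r \<in> {1..n} \<and> s \<in> {1..n} \<and> s = w r then 1 else 0)"

lemma bij_facts:
  assumes "bij_betw w {1..n} {1..n}"
  shows "\<And>r. r \<in> {1..n} \<Longrightarrow> w r \<in> {1..n}"
    and "\<And>r s. r \<in> {1..n} \<Longrightarrow> s \<in> {1..n} \<Longrightarrow> w r = w s \<longleftrightarrow> r = s"
    and "\<And>r. r \<in> {1..n} \<Longrightarrow> \<exists>r0\<in>{1..n}. r = w r0"
  using assms unfolding bij_betw_def inj_on_def by auto

lemma P_mult:
  assumes b: "bij_betw w {1..n} {1..n}" and r: "r \<in> {1..n}"
  shows "mat_mult n (perm_mat n w) (B::'a::semiring_1 matrix) (w r) s = B r s"
proof -
  have "mat_mult n (perm_mat n w) B (w r) s = (\<Sum>k\<in>{1..n}. if k = r then B k s else 0)"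
    unfolding mat_mult_def perm_mat_def
    by (rule sum.cong) (use bij_facts[OF b] r in auto)
  also have "\<dots> = B r s" using r by simp
  finally show ?thesis .
qed

lemma P_mult_out:
  assumes "r \<notin> {1..n}"
  shows "mat_mult n (perm_mat n w) (B::'a::semiring_1 matrix) r s = 0"
  using assms unfolding mat_mult_def perm_mat_def by (intro sum.neutral) auto

lemma mult_T:
  assumes b: "bij_betw w {1..n} {1..n}" and s: "s \<in> {1..n}"
  shows "mat_mult n (B::'a::semiring_1 matrix) (tmat n w) r (w s) = B r s"
proof -
  have "mat_mult n B (tmat n w) r (w s) = (\<Sum>k\<in>{1..n}. if k = s then B r k else 0)"
    unfolding mat_mult_def tmat_def
    by (rule sum.cong) (use bij_facts[OF b] s in auto)
  also have "\<dots> = B r s" using s by simp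
  finally show ?thesis .
qed

lemma mult_T_out:
  assumes "s \<notin> {1..n}"
  shows "mat_mult n (B::'a::semiring_1 matrix) (tmat n w) r s = 0"
  using assms unfolding mat_mult_def tmat_def by (intro sum.neutral) auto

lemma is_mat_T: "is_mat n (tmat n w)"
  unfolding is_mat_def tmat_def by auto

lemma mat_eq_w:
  assumes b: "bij_betw w {1..n} {1..n}"
    and "\<And>r s. r \<in> {1..n} \<Longrightarrow> A (w r) s = B (w r) s"
    and "\<And>r s. r \<notin> {1..n} \<Longrightarrow> A r s = B r s"
  shows "A = B"
proof (intro ext)
  fix r s
  show "A r s = B r s"
  proof (cases "r \<in> {1..n}")
    case True
    then obtain r0 where "r0 \<in> {1..n}" "r = w r0" using bij_facts(3)[OF b] by blast
    then show ?thesis using assms(2) by simp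
  qed (simp add: assms(3))
qed

lemma inv_P:
  assumes b: "bij_betw w {1..n} {1..n}"
  shows "mat_inv n (perm_mat n w) = (tmat n w :: 'a::semiring_1 matrix)"
  unfolding mat_inv_def
proof (rule the_equality)
  have PT: "mat_mult n (perm_mat n w) (tmat n w) = (one_mat n :: 'a matrix)"
    by (rule mat_eq_w[OF b]) (auto simp: P_mult[OF b] P_mult_out one_mat_def tmat_def
        bij_facts[OF b])
  have TP: "mat_mult n (tmat n w) (perm_mat n w) = (one_mat n :: 'a matrix)"
  proof (intro ext)
    fix r s
    have "mat_mult n (tmat n w) (perm_mat n w) r s
       = (\<Sum>k\<in>{1..n}. if k = w r then (if r \<in> {1..n} \<and> s \<in> {1..n} \<and> w r = w s then 1 else 0) else (0::'a))"
      unfolding mat_mult_def tmat_def perm_mat_def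
      by (rule sum.cong) (use bij_facts[OF b] in auto)
    also have "\<dots> = one_mat n r s"
      using bij_facts[OF b] by (auto simp: one_mat_def)
    finally show "mat_mult n (tmat n w) (perm_mat n w) r s = (one_mat n r s :: 'a)" .
  qed
  show "is_mat n (tmat n w :: 'a matrix) \<and> mat_mult n (perm_mat n w) (tmat n w :: 'a matrix) = one_mat n
      \<and> mat_mult n (tmat n w) (perm_mat n w) = (one_mat n :: 'a matrix)"
    by (intro conjI PT TP is_mat_T)
next
  fix B :: "'a matrix"
  assume h: "is_mat n B \<and> mat_mult n (perm_mat n w) B = one_mat n \<and> mat_mult n B (perm_mat n w) = one_mat n"
  show "B = tmat n w"
  proof (intro ext)
    fix r s
    show "B r s = tmat n w r s"
    proof (cases "r \<in> {1..n}")
      case r: True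
      have "B r s = mat_mult n (perm_mat n w) B (w r) s" by (rule P_mult[OF b r, symmetric])
      also have "\<dots> = one_mat n (w r) s" using h by simp
      finally show ?thesis using r bij_facts[OF b] by (auto simp: one_mat_def tmat_def)
    next
      case False then show ?thesis using h by (auto simp: is_mat_def tmat_def)
    qed
  qed
qed

abbreviation conjm :: "nat \<Rightarrow> (nat \<Rightarrow> nat) \<Rightarrow> ('a::{finite,field}) matrix \<Rightarrow> 'a matrix" where
  "conjm n w h \<equiv> mat_mult n (mat_mult n (perm_mat n w) h) (mat_inv n (perm_mat n w))"

lemma pc_conj:
  assumes b: "bij_betw w {1..n} {1..n}" and h: "is_mat n h"
  shows "pc n w (conjm n w h) = h"
proof (intro ext)
  fix r s
  show "pc n w (conjm n w h) r s = h r s"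
  proof (cases "r \<in> {1..n} \<and> s \<in> {1..n}")
    case True
    then show ?thesis
      by (simp add: pc_def inv_P[OF b] mult_T[OF b] P_mult[OF b])
  next
    case False
    then show ?thesis using h by (auto simp: pc_def is_mat_def)
  qed
qed

lemma conj_pc:
  assumes b: "bij_betw w {1..n} {1..n}" and g: "is_mat n g"
  shows "conjm n w (pc n w g) = g"
proof (rule mat_eq_w[OF b])
  fix r s assume r: "r \<in> {1..n}"
  show "conjm n w (pc n w g) (w r) s = g (w r) s"
  proof (cases "s \<in> {1..n}")
    case True
    then obtain s0 where s0: "s0 \<in> {1..n}" "s = w s0" using bij_facts(3)[OF b] by blast
    then show ?thesis using r
      by (simp add: pc_def inv_P[OF b] mult_T[OF b] P_mult[OF b])
  next
    case False
    then show ?thesis using g by (simp add: inv_P[OF b] mult_T_out is_mat_def)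
  qed
next
  fix r s assume r: "r \<notin> {1..n}"
  have "conjm n w (pc n w g) r s = 0"
    unfolding mat_mult_def[of n "mat_mult n (perm_mat n w) (pc n w g)"]
    by (intro sum.neutral) (simp add: P_mult_out[OF r])
  then show "conjm n w (pc n w g) r s = g r s" using g r by (simp add: is_mat_def)
qed

lemma mem_conj_set:
  assumes b: "bij_betw w {1..n} {1..n}" and g: "is_mat n g" and H: "\<And>h. h \<in> H \<Longrightarrow> is_mat n h"
  shows "g \<in> conj_set n w H \<longleftrightarrow> pc n w g \<in> H"
proof
  assume "g \<in> conj_set n w H"
  then obtain h where "h \<in> H" "g = conjm n w h" unfolding conj_set_def by blast
  then show "pc n w g \<in> H" using pc_conj[OF b H] by simp
next
  assume "pc n w g \<in> H"
  then have "conjm n w (pc n w g) \<in> conj_set n w H" unfolding conj_set_def by blast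
  then show "g \<in> conj_set n w H" using conj_pc[OF b g] by simp
qed

lemma pc_mult:
  assumes b: "bij_betw w {1..n} {1..n}"
  shows "pc n w (mat_mult n A B) = mat_mult n (pc n w A) (pc n w (B::'a::semiring_0 matrix))"
proof (intro ext)
  fix r s
  show "pc n w (mat_mult n A B) r s = mat_mult n (pc n w A) (pc n w B) r s"
  proof (cases "r \<in> {1..n} \<and> s \<in> {1..n}")
    case True
    have "mat_mult n (pc n w A) (pc n w B) r s = (\<Sum>k\<in>{1..n}. A (w r) (w k) * B (w k) (w s))"
      unfolding mat_mult_def pc_def using True by (intro sum.cong) auto
    also have "\<dots> = (\<Sum>k\<in>{1..n}. A (w r) k * B k (w s))"
      by (rule sum.reindex_bij_betw[OF b])
    finally show ?thesis using True by (simp add: pc_def mat_mult_def)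
  next
    case False
    then show ?thesis unfolding pc_def mat_mult_def by (auto intro!: sum.neutral)
  qed
qed

lemma pc_one:
  assumes b: "bij_betw w {1..n} {1..n}"
  shows "pc n w (one_mat n) = one_mat n"
  using bij_facts[OF b] unfolding pc_def one_mat_def by (intro ext) auto

lemma pc_GL:
  assumes b: "bij_betw w {1..n} {1..n}" and g: "g \<in> GL n"
  shows "pc n w g \<in> GL n"
proof -
  obtain B where B: "is_mat n B" "mat_mult n g B = one_mat n" "mat_mult n B g = one_mat n"
    using g unfolding GL_def by blast
  have "is_mat n (pc n w B)" "is_mat n (pc n w g)" unfolding is_mat_def pc_def by auto
  moreover have "mat_mult n (pc n w g) (pc n w B) = one_mat n" "mat_mult n (pc n w B) (pc n w g) = one_mat n"
    using B by (simp_all add: pc_mult[OF b, symmetric] pc_one[OF b])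
  ultimately show ?thesis unfolding GL_def by blast
qed

lemma ball_w:
  assumes b: "bij_betw w {1..n} {1..n}"
  shows "(\<forall>x\<in>{1..n}. P x) \<longleftrightarrow> (\<forall>r\<in>{1..n}. P (w r))"
  using bij_facts[OF b] by metis

lemma ball2_w:
  assumes b: "bij_betw w {1..n} {1..n}" and h: "\<forall>r\<in>{1..n}. \<forall>s\<in>{1..n}. P (w r) (w s)"
  shows "\<forall>r\<in>{1..n}. \<forall>s\<in>{1..n}. P r s"
  using bij_facts(3)[OF b] h by metis

lemma wI_facts:
  assumes I: "I \<subseteq> {1..n}" and c: "card I = i"
  shows "bij_betw (wI n I) {1..n} {1..n}" and "\<And>r. r \<in> {1..n} \<Longrightarrow> wI n I r \<in> I \<longleftrightarrow> r \<le> i"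
proof -
  define xs where "xs = sorted_list_of_set I @ sorted_list_of_set ({1..n} - I)"
  have fI: "finite I" using I finite_subset by blast
  have sx: "set xs = {1..n}" using I fI by (auto simp: xs_def)
  have dx: "distinct xs" using fI by (auto simp: xs_def)
  have lx: "length xs = n" using distinct_card[OF dx] sx by simp
  have li: "length (sorted_list_of_set I) = i" using c fI by simp
  have w: "\<And>k. k \<in> {1..n} \<Longrightarrow> wI n I k = xs ! (k - 1)" by (simp add: wI_def xs_def)
  show "bij_betw (wI n I) {1..n} {1..n}"
    unfolding bij_betw_def
  proof
    show "inj_on (wI n I) {1..n}"
    proof (rule inj_onI)
      fix x y assume "x \<in> {1..n}" "y \<in> {1..n}" "wI n I x = wI n I y"
      moreover have "x - 1 < length xs" "y - 1 < length xs" using lx \<open>x \<in> {1..n}\<close> \<open>y \<in> {1..n}\<close> by auto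
      ultimately have "x - 1 = y - 1" using w \<open>x \<in> {1..n}\<close> \<open>y \<in> {1..n}\<close> \<open>wI n I x = wI n I y\<close> nth_eq_iff_index_eq[OF dx, of "x - 1" "y - 1"] by simp
      then show "x = y" using \<open>x \<in> {1..n}\<close> \<open>y \<in> {1..n}\<close> by auto
    qed
    show "wI n I ` {1..n} = {1..n}"
    proof
      show "wI n I ` {1..n} \<subseteq> {1..n}"
      proof
        fix x assume "x \<in> wI n I ` {1..n}"
        then obtain k where k: "k \<in> {1..n}" "x = wI n I k" by blast
        then have "k - 1 < length xs" using lx by auto
        then have "xs ! (k - 1) \<in> set xs" by (rule nth_mem)
        then show "x \<in> {1..n}" using k w sx by simp
      qed
      show "{1..n} \<subseteq> wI n I ` {1..n}"
      proof
        fix x assume "x \<in> {1..n}"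
        then obtain j where j: "j < n" "xs ! j = x" using sx lx by (metis in_set_conv_nth)
        then have "Suc j \<in> {1..n}" "wI n I (Suc j) = x" using w by auto
        then show "x \<in> wI n I ` {1..n}" by blast
      qed
    qed
  qed
  fix r assume r: "r \<in> {1..n}"
  show "wI n I r \<in> I \<longleftrightarrow> r \<le> i"
  proof (cases "r \<le> i")
    case True
    then have ri: "r - 1 < length (sorted_list_of_set I)" using li r by auto
    then have "wI n I r = sorted_list_of_set I ! (r - 1)" using w[OF r] by (simp add: xs_def nth_append)
    then show ?thesis using True nth_mem[OF ri] fI by simp
  next
    case False
    then have "\<not> r - 1 < length (sorted_list_of_set I)" using li r by auto
    then have "wI n I r = sorted_list_of_set ({1..n} - I) ! (r - 1 - i)" using w[OF r] li by (simp add: xs_def nth_append)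
    moreover have "r - 1 - i < length (sorted_list_of_set ({1..n} - I))"
      using lx li r False by (simp add: xs_def)
    ultimately have "wI n I r \<in> {1..n} - I" by (metis nth_mem finite_Diff finite_atLeastAtMost sorted_list_of_set(1))
    then show ?thesis using False by simp
  qed
qed


lemma GL_mat: "g \<in> GL n \<Longrightarrow> is_mat n g"
  unfolding GL_def by blast

theorem lemma6p5:
  fixes n i :: nat and I :: "nat set"
  assumes "i \<le> n" and "I \<subseteq> {1..n}" and "card I = i"
  shows "(UL n I :: ('a::{finite,field}) matrix set) = conj_set n (wI n I) (Lsub n i) \<inter> UT n
       \<and> (UR n I :: 'a matrix set) = conj_set n (wI n I) (Rsub n i) \<inter> UT n
       \<and> (UP n I :: 'a matrix set) = conj_set n (wI n I) (Psub n i) \<inter> UT n"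
proof -
  define w where "w = wI n I"
  have b: "bij_betw w {1..n} {1..n}" using wI_facts[OF assms(2,3)] w_def by simp
  have wi: "\<And>r. r \<in> {1..n} \<Longrightarrow> w r \<in> I \<longleftrightarrow> r \<le> i" using wI_facts[OF assms(2,3)] w_def by simp
  note bf = bij_facts[OF b]
  have one_w: "\<And>r s. r \<in> {1..n} \<Longrightarrow> s \<in> {1..n} \<Longrightarrow> (one_mat n (w r) (w s) :: 'a) = one_mat n r s"
    using bf by (auto simp: one_mat_def)
  have memc: "\<And>g H. g \<in> UT n \<Longrightarrow> H \<subseteq> GL n \<Longrightarrow> (g::'a matrix) \<in> conj_set n w H \<longleftrightarrow> pc n w g \<in> H"
    by (rule mem_conj_set[OF b]) (auto simp: UT_def intro: GL_mat)
  have pcG: "\<And>g. (g::'a matrix) \<in> UT n \<Longrightarrow> pc n w g \<in> GL n" using pc_GL[OF b] by (auto simp: UT_def)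
  have "(UL n I :: 'a matrix set) = conj_set n w (Lsub n i) \<inter> UT n"
  proof (intro set_eqI iffI)
    fix g :: "'a matrix"
    assume g: "g \<in> UL n I"
    then have gU: "g \<in> UT n" by (simp add: UL_def)
    have c: "\<forall>r\<in>{1..n}. \<forall>s\<in>{1..n}. g (w r) (w s) - one_mat n r s \<noteq> 0 \<longrightarrow>
      ((w r \<in> I \<and> w s \<in> I) \<or> (w r \<in> {1..n} - I \<and> w s \<in> {1..n} - I))"
      using g bf one_w unfolding UL_def by auto
    have c': "\<forall>r\<in>{1..n}. \<forall>s\<in>{1..n}. g (w r) (w s) \<noteq> 0 \<longrightarrow> ((r \<le> i \<and> s \<le> i) \<or> (i < r \<and> i < s))"
    proof (intro ballI impI)
      fix r s assume r: "r \<in> {1..n}" and s: "s \<in> {1..n}" and nz: "g (w r) (w s) \<noteq> 0"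
      show "(r \<le> i \<and> s \<le> i) \<or> (i < r \<and> i < s)"
      proof (cases "r = s")
        case False
        then have "one_mat n r s = (0::'a)" by (simp add: one_mat_def)
        then have "(w r \<in> I \<and> w s \<in> I) \<or> (w r \<in> {1..n} - I \<and> w s \<in> {1..n} - I)"
          using c r s nz by auto
        then show ?thesis using wi[OF r] wi[OF s] by auto
      qed auto
    qed
    have "pc n w g \<in> Lsub n i"
      unfolding Lsub_def using pcG[OF gU] c'
      by (auto simp: pc_def)
    then show "g \<in> conj_set n w (Lsub n i) \<inter> UT n" using memc[OF gU] gU by (auto simp: Lsub_def)
  next
    fix g :: "'a matrix"
    assume g: "g \<in> conj_set n w (Lsub n i) \<inter> UT n"
    then have gU: "g \<in> UT n" by simp
    then have "pc n w g \<in> Lsub n i" using memc[OF gU] g by (auto simp: Lsub_def)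
    then have c: "\<forall>r\<in>{1..n}. \<forall>s\<in>{1..n}. g (w r) (w s) \<noteq> 0 \<longrightarrow> ((r \<le> i \<and> s \<le> i) \<or> (i < r \<and> i < s))"
      by (auto simp: Lsub_def pc_def)
    have cw: "\<forall>r\<in>{1..n}. \<forall>s\<in>{1..n}. g (w r) (w s) - one_mat n (w r) (w s) \<noteq> 0 \<longrightarrow>
      ((w r \<in> I \<and> w s \<in> I) \<or> (w r \<in> {1..n} - I \<and> w s \<in> {1..n} - I))"
    proof (intro ballI impI)
      fix r s assume r: "r \<in> {1..n}" and s: "s \<in> {1..n}" and nz: "g (w r) (w s) - one_mat n (w r) (w s) \<noteq> 0"
      have wr: "w r \<in> {1..n}" "w s \<in> {1..n}" using bf r s by auto
      show "(w r \<in> I \<and> w s \<in> I) \<or> (w r \<in> {1..n} - I \<and> w s \<in> {1..n} - I)"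
      proof (cases "r = s")
        case False
        then have "one_mat n (w r) (w s) = (0::'a)" using one_w r s by (simp add: one_mat_def)
        then have "(r \<le> i \<and> s \<le> i) \<or> (i < r \<and> i < s)"
          using c r s nz by auto
        then show ?thesis using wi[OF r] wi[OF s] wr by auto
      qed (use wr in auto)
    qed
    then have "\<forall>r\<in>{1..n}. \<forall>s\<in>{1..n}. g r s - one_mat n r s \<noteq> 0 \<longrightarrow>
      ((r \<in> I \<and> s \<in> I) \<or> (r \<in> {1..n} - I \<and> s \<in> {1..n} - I))"
      by (rule ball2_w[OF b])
    then show "g \<in> UL n I" using gU by (simp add: UL_def)
  qed
  moreover have "(UR n I :: 'a matrix set) = conj_set n w (Rsub n i) \<inter> UT n"
  proof (intro set_eqI iffI)
    fix g :: "'a matrix"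
    assume g: "g \<in> UR n I"
    then have gU: "g \<in> UT n" by (simp add: UR_def)
    have c: "\<forall>r\<in>{1..n}. \<forall>s\<in>{1..n}. g (w r) (w s) - one_mat n r s \<noteq> 0 \<longrightarrow>
      (w r \<in> I \<and> w s \<in> {1..n} - I)"
    proof (intro ballI)
      fix r s assume r: "r \<in> {1..n}" and s: "s \<in> {1..n}"
      have "w r \<in> {1..n}" "w s \<in> {1..n}" using bf r s by auto
      then show "g (w r) (w s) - one_mat n r s \<noteq> 0 \<longrightarrow> (w r \<in> I \<and> w s \<in> {1..n} - I)"
        using g one_w[OF r s] unfolding UR_def by auto
    qed
    have c': "\<forall>r\<in>{1..n}. \<forall>s\<in>{1..n}. g (w r) (w s) - one_mat n r s \<noteq> 0 \<longrightarrow> (r \<le> i \<and> i < s)"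
    proof (intro ballI impI)
      fix r s assume r: "r \<in> {1..n}" and s: "s \<in> {1..n}" and nz: "g (w r) (w s) - one_mat n r s \<noteq> 0"
      then have "w r \<in> I \<and> w s \<in> {1..n} - I" using c by blast
      then show "r \<le> i \<and> i < s" using wi[OF r] wi[OF s] by auto
    qed
    have "pc n w g \<in> Rsub n i"
      unfolding Rsub_def using pcG[OF gU] c'
      by (auto simp: pc_def)
    then show "g \<in> conj_set n w (Rsub n i) \<inter> UT n" using memc[OF gU] gU by (auto simp: Rsub_def)
  next
    fix g :: "'a matrix"
    assume g: "g \<in> conj_set n w (Rsub n i) \<inter> UT n"
    then have gU: "g \<in> UT n" by simp
    then have "pc n w g \<in> Rsub n i" using memc[OF gU] g by (auto simp: Rsub_def)
    then have c: "\<forall>r\<in>{1..n}. \<forall>s\<in>{1..n}. g (w r) (w s) - one_mat n r s \<noteq> 0 \<longrightarrow> (r \<le> i \<and> i < s)"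
      by (auto simp: Rsub_def pc_def)
    have cw: "\<forall>r\<in>{1..n}. \<forall>s\<in>{1..n}. g (w r) (w s) - one_mat n (w r) (w s) \<noteq> 0 \<longrightarrow>
      (w r \<in> I \<and> w s \<in> {1..n} - I)"
    proof (intro ballI impI)
      fix r s assume r: "r \<in> {1..n}" and s: "s \<in> {1..n}" and nz: "g (w r) (w s) - one_mat n (w r) (w s) \<noteq> 0"
      have "r \<le> i \<and> i < s" using c r s nz one_w[OF r s] by auto
      then show "w r \<in> I \<and> w s \<in> {1..n} - I" using wi[OF r] wi[OF s] bf r s by auto
    qed
    then have "\<forall>r\<in>{1..n}. \<forall>s\<in>{1..n}. g r s - one_mat n r s \<noteq> 0 \<longrightarrow>
      (r \<in> I \<and> s \<in> {1..n} - I)"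
      by (rule ball2_w[OF b])
    then show "g \<in> UR n I" using gU by (simp add: UR_def)
  qed
  moreover have "(UP n I :: 'a matrix set) = conj_set n w (Psub n i) \<inter> UT n"
  proof (intro set_eqI iffI)
    fix g :: "'a matrix"
    assume g: "g \<in> UP n I"
    then have gU: "g \<in> UT n" by (simp add: UP_def)
    have c: "\<forall>r\<in>{1..n}. \<forall>s\<in>{1..n}. (w r \<in> {1..n} - I \<and> w s \<in> I) \<longrightarrow>
      g (w r) (w s) - one_mat n r s = 0"
    proof (intro ballI)
      fix r s assume r: "r \<in> {1..n}" and s: "s \<in> {1..n}"
      have "w r \<in> {1..n}" "w s \<in> {1..n}" using bf r s by auto
      then show "(w r \<in> {1..n} - I \<and> w s \<in> I) \<longrightarrow> g (w r) (w s) - one_mat n r s = 0"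
        using g one_w[OF r s] unfolding UP_def by auto
    qed
    have c': "\<forall>r\<in>{1..n}. \<forall>s\<in>{1..n}. (i < r \<and> s \<le> i) \<longrightarrow> g (w r) (w s) = 0"
    proof (intro ballI impI)
      fix r s assume r: "r \<in> {1..n}" and s: "s \<in> {1..n}" and rs: "i < r \<and> s \<le> i"
      then have "w r \<in> {1..n} - I \<and> w s \<in> I" using wi[OF r] wi[OF s] bf by auto
      then have "g (w r) (w s) - one_mat n r s = 0" using c r s by blast
      moreover have "one_mat n r s = (0::'a)" using rs by (auto simp: one_mat_def)
      ultimately show "g (w r) (w s) = 0" by simp
    qed
    have "pc n w g \<in> Psub n i"
      unfolding Psub_def using pcG[OF gU] c'
      by (auto simp: pc_def)
    then show "g \<in> conj_set n w (Psub n i) \<inter> UT n" using memc[OF gU] gU by (auto simp: Psub_def)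
  next
    fix g :: "'a matrix"
    assume g: "g \<in> conj_set n w (Psub n i) \<inter> UT n"
    then have gU: "g \<in> UT n" by simp
    then have "pc n w g \<in> Psub n i" using memc[OF gU] g by (auto simp: Psub_def)
    then have c: "\<forall>r\<in>{1..n}. \<forall>s\<in>{1..n}. (i < r \<and> s \<le> i) \<longrightarrow> g (w r) (w s) = 0"
      by (auto simp: Psub_def pc_def)
    have cw: "\<forall>r\<in>{1..n}. \<forall>s\<in>{1..n}. (w r \<in> {1..n} - I \<and> w s \<in> I) \<longrightarrow>
      g (w r) (w s) - one_mat n (w r) (w s) = 0"
    proof (intro ballI impI)
      fix r s assume r: "r \<in> {1..n}" and s: "s \<in> {1..n}" and rs: "w r \<in> {1..n} - I \<and> w s \<in> I"
      then have "i < r \<and> s \<le> i" using wi[OF r] wi[OF s] by auto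
      then have "g (w r) (w s) = 0" "one_mat n r s = (0::'a)" using c r s by (auto simp: one_mat_def)
      then show "g (w r) (w s) - one_mat n (w r) (w s) = 0" using one_w[OF r s] by simp
    qed
    then have "\<forall>r\<in>{1..n}. \<forall>s\<in>{1..n}. (r \<in> {1..n} - I \<and> s \<in> I) \<longrightarrow>
      g r s - one_mat n r s = 0"
      by (rule ball2_w[OF b])
    then show "g \<in> UP n I" using gU by (simp add: UP_def)
  qed
  ultimately show ?thesis unfolding w_def by blast
qed

end
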